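(* Let $f:\mathbb R^n\to\mathbb R$ be an SOS-convex polynomial. Assume $f=s+p$, where $s=\sum_{j=1}^n u_j$ for convex univariate polynomials $u_j$ in $x_j$ of degree at most $2d_j$, $j=1,\dots,n$, and $p$ is an SOS-convex polynomial on $\mathbb R^n$ of degree at most $2r$. If $f(\mathbf x)\ge0$ for all $\mathbf x\in\mathbb R^n$, then there exist $\sigma\in\Sigma[\mathbf x]_r$ and $\sigma_j\in\Sigma[x_j]_{d_j}$, $j=1,\dots,n$, such that $f=\sigma+\sum_{j=1}^n\sigma_j$.
   Context: A polynomial $f$ on $\mathbb R^n$ is SOS-convex if its Hessian $\nabla^2 f(\mathbf x)$ is an SOS matrix polynomial, i.e., $\nabla^2 f(\mathbf x)=F(\mathbf x)^TF(\mathbf x)$ for some matrix polynomial $F$ with $n$ columns; equivalently $f(\mathbf x)-f(\mathbf y)-\langle\nabla f(\mathbf y),\mathbf x-\mathbf y\rangle$ is a sum of squares in $(\mathbf x,\mathbf y)$. $\Sigma[\mathbf x]_r$ denotes the set of sums of squares of polynomials in $\mathbf x$ of degree at most $2r$, and $\Sigma[x_j]_{d_j}$ the set of sums of squares of univariate polynomials in $x_j$ of degree at most $2d_j$. *)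

theory Defs
  imports "HOL-Analysis.Analysis" "HOL-Computational_Algebra.Polynomial"
begin

definition monom_val :: "real ^ 'i \<Rightarrow> ('i::finite \<Rightarrow> nat) \<Rightarrow> real" where
  "monom_val x \<alpha> = (\<Prod>i\<in>UNIV. (x $ i) ^ (\<alpha> i))"

definition mpoly_deg_le :: "nat \<Rightarrow> (real ^ 'i::finite \<Rightarrow> real) \<Rightarrow> bool" where
  "mpoly_deg_le k f \<longleftrightarrow> (\<exists>c :: ('i \<Rightarrow> nat) \<Rightarrow> real.
      f = (\<lambda>x. \<Sum>\<alpha>\<in>{\<alpha>. sum \<alpha> UNIV \<le> k}. c \<alpha> * monom_val x \<alpha>))"

definition mpoly :: "(real ^ 'i::finite \<Rightarrow> real) \<Rightarrow> bool" where
  "mpoly f \<longleftrightarrow> (\<exists>k. mpoly_deg_le k f)"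

definition sos_le :: "nat \<Rightarrow> (real ^ 'i::finite \<Rightarrow> real) \<Rightarrow> bool" where
  "sos_le r f \<longleftrightarrow> (\<exists>qs. (\<forall>q\<in>set qs. mpoly_deg_le r q) \<and>
      f = (\<lambda>x. \<Sum>q\<leftarrow>qs. (q x)\<^sup>2))"

definition sos :: "(real ^ 'i::finite \<Rightarrow> real) \<Rightarrow> bool" where
  "sos f \<longleftrightarrow> (\<exists>r. sos_le r f)"

definition join_vec :: "real ^ 'i \<Rightarrow> real ^ 'i \<Rightarrow> real ^ ('i + 'i)" where
  "join_vec x y = (\<chi> k. case k of Inl a \<Rightarrow> x $ a | Inr b \<Rightarrow> y $ b)"

definition sos_convex :: "(real ^ 'i::finite \<Rightarrow> real) \<Rightarrow> bool" where
  "sos_convex f \<longleftrightarrow> mpoly f \<and> (\<exists>g :: real ^ 'i \<Rightarrow> real ^ 'i.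
      (\<forall>y. (f has_derivative (\<lambda>h. g y \<bullet> h)) (at y)) \<and>
      (\<exists>F :: real ^ ('i + 'i) \<Rightarrow> real. sos F \<and>
         (\<forall>x y. F (join_vec x y) = f x - f y - g y \<bullet> (x - y))))"

definition uni_sos_le :: "nat \<Rightarrow> real poly \<Rightarrow> bool" where
  "uni_sos_le d p \<longleftrightarrow> (\<exists>qs. (\<forall>q\<in>set qs. degree q \<le> d) \<and> p = (\<Sum>q\<leftarrow>qs. q ^ 2))"

end

theory Submission
  imports Defs "HOL-Computational_Algebra.Fundamental_Theorem_Algebra"
begin

lemma finite_deg_set: "finite {\<alpha>::'i::finite \<Rightarrow> nat. sum \<alpha> UNIV \<le> k}"
proof -
  have "{\<alpha>::'i \<Rightarrow> nat. sum \<alpha> UNIV \<le> k} \<subseteq> (\<Pi>\<^sub>E i\<in>UNIV. {..k})"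
  proof
    fix \<alpha> :: "'i \<Rightarrow> nat" assume "\<alpha> \<in> {\<alpha>. sum \<alpha> UNIV \<le> k}"
    then have "\<alpha> i \<le> k" for i
      using member_le_sum[of i UNIV \<alpha>] by auto
    then show "\<alpha> \<in> (\<Pi>\<^sub>E i\<in>UNIV. {..k})" by auto
  qed
  moreover have "finite (\<Pi>\<^sub>E i\<in>(UNIV::'i set). {..k})"
    by (rule finite_PiE) auto
  ultimately show ?thesis by (rule finite_subset)
qed

lemma finite_deg_eq_set: "finite {\<alpha>::'i::finite \<Rightarrow> nat. sum \<alpha> UNIV = k}"
  by (rule finite_subset[OF _ finite_deg_set[of k]]) auto

lemma mpoly_sum:
  fixes a :: "'b \<Rightarrow> real" and \<beta> :: "'b \<Rightarrow> ('i::finite \<Rightarrow> nat)"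
  assumes "finite A" "\<And>b. b \<in> A \<Longrightarrow> sum (\<beta> b) UNIV \<le> k"
  shows "mpoly_deg_le k (\<lambda>x::real^'i. \<Sum>b\<in>A. a b * monom_val x (\<beta> b))"
proof -
  define c where "c \<gamma> = (\<Sum>b\<in>{b\<in>A. \<beta> b = \<gamma>}. a b)" for \<gamma>
  have "(\<Sum>\<gamma>\<in>{\<alpha>. sum \<alpha> UNIV \<le> k}. c \<gamma> * monom_val x \<gamma>) = (\<Sum>b\<in>A. a b * monom_val x (\<beta> b))" for x
  proof -
    have "(\<Sum>\<gamma>\<in>{\<alpha>. sum \<alpha> UNIV \<le> k}. c \<gamma> * monom_val x \<gamma>)
       = (\<Sum>\<gamma>\<in>{\<alpha>. sum \<alpha> UNIV \<le> k}. \<Sum>b\<in>{b\<in>A. \<beta> b = \<gamma>}. a b * monom_val x (\<beta> b))"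
      unfolding c_def sum_distrib_right by (intro sum.cong refl) auto
    also have "\<dots> = (\<Sum>b\<in>A. a b * monom_val x (\<beta> b))"
      by (rule sum.group) (use assms finite_deg_set in auto)
    finally show ?thesis .
  qed
  then show ?thesis unfolding mpoly_deg_le_def by (intro exI[of _ c]) auto
qed

lemma ray_poly:
  fixes q :: "real^'i::finite \<Rightarrow> real" and L :: "'i \<Rightarrow> real poly"
  assumes "mpoly_deg_le k q" "\<And>i. degree (L i) \<le> 1"
  shows "\<exists>P. degree P \<le> k \<and> (\<forall>t. q (\<chi> i. poly (L i) t) = poly P t)"
proof -
  obtain c where q: "q = (\<lambda>x. \<Sum>\<alpha>\<in>{\<alpha>. sum \<alpha> UNIV \<le> k}. c \<alpha> * monom_val x \<alpha>)"
    using assms(1) unfolding mpoly_deg_le_def by blast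
  define P where "P = (\<Sum>\<alpha>\<in>{\<alpha>::'i\<Rightarrow>nat. sum \<alpha> UNIV \<le> k}. smult (c \<alpha>) (\<Prod>i\<in>UNIV. (L i) ^ (\<alpha> i)))"
  have "q (\<chi> i. poly (L i) t) = poly P t" for t
    unfolding q P_def by (simp add: poly_sum poly_prod monom_val_def)
  moreover have "degree P \<le> k"
    unfolding P_def
  proof (rule degree_sum_le)
    show "finite {\<alpha>::'i\<Rightarrow>nat. sum \<alpha> UNIV \<le> k}" by (rule finite_deg_set)
  next
    fix \<alpha> :: "'i \<Rightarrow> nat" assume a: "\<alpha> \<in> {\<alpha>. sum \<alpha> UNIV \<le> k}"
    have "degree (smult (c \<alpha>) (\<Prod>i\<in>UNIV. (L i) ^ (\<alpha> i))) \<le> degree (\<Prod>i\<in>UNIV. (L i) ^ (\<alpha> i))"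
      by (rule degree_smult_le)
    also have "\<dots> \<le> sum (degree \<circ> (\<lambda>i. (L i) ^ (\<alpha> i))) UNIV"
      by (rule degree_prod_sum_le) simp
    also have "\<dots> \<le> sum \<alpha> UNIV"
    proof (rule sum_mono)
      fix i
      have "degree (L i ^ \<alpha> i) \<le> degree (L i) * \<alpha> i" by (rule degree_power_le)
      also have "\<dots> \<le> \<alpha> i" using assms(2)[of i] by simp
      finally show "(degree \<circ> (\<lambda>i. L i ^ \<alpha> i)) i \<le> \<alpha> i" by simp
    qed
    also have "\<dots> \<le> k" using a by simp
    finally show "degree (smult (c \<alpha>) (\<Prod>i\<in>UNIV. (L i) ^ (\<alpha> i))) \<le> k" .
  qed
  ultimately show ?thesis by blast
qed


lemma monom_val_scale: "monom_val (t *\<^sub>R x) \<alpha> = t ^ sum \<alpha> UNIV * monom_val x \<alpha>"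
  unfolding monom_val_def by (simp add: power_mult_distrib prod.distrib power_sum)

lemma regroup:
  fixes c :: "('i::finite \<Rightarrow> nat) \<Rightarrow> real"
  shows "(\<Sum>\<alpha>\<in>{\<alpha>. sum \<alpha> UNIV \<le> k}. c \<alpha> * monom_val x \<alpha>)
     = (\<Sum>m\<le>k. \<Sum>\<alpha>\<in>{\<alpha>. sum \<alpha> UNIV = m}. c \<alpha> * monom_val x \<alpha>)"
proof -
  have "(\<Sum>m\<le>k. \<Sum>\<alpha>\<in>{\<alpha>. sum \<alpha> UNIV = m}. c \<alpha> * monom_val x \<alpha>)
      = (\<Sum>m\<le>k. \<Sum>\<alpha>\<in>{\<alpha>\<in>{\<alpha>. sum \<alpha> UNIV \<le> k}. sum \<alpha> UNIV = m}. c \<alpha> * monom_val x \<alpha>)"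
    by (intro sum.cong refl) auto
  also have "\<dots> = (\<Sum>\<alpha>\<in>{\<alpha>. sum \<alpha> UNIV \<le> k}. c \<alpha> * monom_val x \<alpha>)"
    by (rule sum.group) (auto simp: finite_deg_set)
  finally show ?thesis by simp
qed

lemma sum_extend: "(K::nat) \<le> N \<Longrightarrow> sum f {..K} = (\<Sum>m\<le>N. if m \<le> K then f m else (0::real))"
proof -
  assume "K \<le> N"
  then have "{m\<in>{..N}. m \<le> K} = {..K}" by auto
  then show ?thesis using sum.inter_filter[of "{..N}" f "\<lambda>m. m \<le> K"] by simp
qed

lemma hom_reduce:
  fixes q :: "real^'i::finite \<Rightarrow> real"
  assumes "mpoly_deg_le K q" and "\<And>x. \<exists>P. degree P \<le> r \<and> (\<forall>t. q (t *\<^sub>R x) = poly P t)"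
  shows "mpoly_deg_le r q"
proof -
  obtain c where q: "q = (\<lambda>x. \<Sum>\<alpha>\<in>{\<alpha>. sum \<alpha> UNIV \<le> K}. c \<alpha> * monom_val x \<alpha>)"
    using assms(1) unfolding mpoly_deg_le_def by blast
  define Q where "Q m x = (\<Sum>\<alpha>\<in>{\<alpha>::'i\<Rightarrow>nat. sum \<alpha> UNIV = m}. c \<alpha> * monom_val x \<alpha>)" for m x
  have qQ: "q x = (\<Sum>m\<le>K. Q m x)" for x
    unfolding q Q_def by (rule regroup)
  have Qs: "Q m (t *\<^sub>R x) = t ^ m * Q m x" for m t x
    unfolding Q_def monom_val_scale sum_distrib_left by (intro sum.cong refl) auto
  have Qz: "Q m x = 0" if "m > r" "m \<le> K" for m x
  proof -
    obtain P where P: "degree P \<le> r" "\<And>t. q (t *\<^sub>R x) = poly P t" using assms(2) by blast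
    define R where "R = (\<Sum>m\<le>K. monom (Q m x) m)"
    have "poly R t = poly P t" for t
      unfolding R_def P(2)[symmetric] qQ Qs by (simp add: poly_sum poly_monom mult.commute)
    then have "R = P" using poly_eq_poly_eq_iff by blast
    then have "coeff R m = 0" using P(1) that by (simp add: coeff_eq_0)
    moreover have "coeff R m = (if m \<le> K then Q m x else 0)"
      unfolding R_def by (simp add: coeff_sum coeff_monom)
    ultimately show ?thesis using that(2) by simp
  qed
  define c' where "c' \<alpha> = (if sum \<alpha> UNIV \<le> K then c \<alpha> else 0)" for \<alpha>
  have "q x = (\<Sum>\<alpha>\<in>{\<alpha>. sum \<alpha> UNIV \<le> r}. c' \<alpha> * monom_val x \<alpha>)" for x
  proof -
    have "q x = (\<Sum>m\<le>K + r. if m \<le> K then Q m x else 0)"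
      unfolding qQ by (rule sum_extend) simp
    also have "\<dots> = (\<Sum>m\<le>K + r. if m \<le> r then (if m \<le> K then Q m x else 0) else 0)"
      by (intro sum.cong refl) (auto simp: Qz)
    also have "\<dots> = (\<Sum>m\<le>r. if m \<le> K then Q m x else 0)"
      by (rule sum_extend[symmetric]) simp
    also have "\<dots> = (\<Sum>m\<le>r. \<Sum>\<alpha>\<in>{\<alpha>. sum \<alpha> UNIV = m}. c' \<alpha> * monom_val x \<alpha>)"
      unfolding Q_def c'_def by (intro sum.cong refl) auto
    also have "\<dots> = (\<Sum>\<alpha>\<in>{\<alpha>. sum \<alpha> UNIV \<le> r}. c' \<alpha> * monom_val x \<alpha>)"
      by (rule regroup[symmetric])
    finally show ?thesis .
  qed
  then show ?thesis unfolding mpoly_deg_le_def by (intro exI[of _ c']) auto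
qed


lemma add_lc_nonneg:
  fixes A B :: "real poly"
  assumes "lead_coeff A \<ge> 0" "lead_coeff B \<ge> 0"
  shows "degree A \<le> degree (A + B) \<and> degree B \<le> degree (A + B) \<and> lead_coeff (A + B) \<ge> 0"
proof (cases "degree A" "degree B" rule: linorder_cases)
  case less
  then have "degree (A + B) = degree B" by (rule degree_add_eq_right)
  moreover have "coeff A (degree B) = 0" using less by (simp add: coeff_eq_0)
  ultimately show ?thesis using less assms by simp
next
  case greater
  then have "degree (A + B) = degree A" by (rule degree_add_eq_left)
  moreover have "coeff B (degree A) = 0" using greater by (simp add: coeff_eq_0)
  ultimately show ?thesis using greater assms by simp
next
  case equal
  show ?thesis
  proof (cases "lead_coeff A + lead_coeff B = 0")
    case True
    then have "A = 0" "B = 0" using assms by (auto simp: add_nonneg_eq_0_iff)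
    then show ?thesis by simp
  next
    case False
    have c: "coeff (A + B) (degree A) = lead_coeff A + lead_coeff B" using equal by simp
    then have "degree A \<le> degree (A + B)" using False by (intro le_degree) simp
    moreover have "degree (A + B) \<le> degree A" using equal degree_add_le[of A "degree A" B] by simp
    ultimately show ?thesis using equal c assms by simp
  qed
qed

lemma sos_list_deg:
  fixes Ps :: "real poly list"
  shows "(\<forall>P\<in>set Ps. 2 * degree P \<le> degree (\<Sum>P\<leftarrow>Ps. P ^ 2)) \<and> lead_coeff (\<Sum>P\<leftarrow>Ps. P ^ 2) \<ge> 0"
proof (induction Ps)
  case Nil
  then show ?case by simp
next
  case (Cons P Ps)
  have l: "lead_coeff (P ^ 2) \<ge> 0" by (simp add: lead_coeff_power)
  have d: "degree (P ^ 2) = 2 * degree P"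
    by (cases "P = 0") (simp_all add: degree_power_eq)
  from add_lc_nonneg[OF l conjunct2[OF Cons.IH]] d Cons.IH show ?case by auto
qed

lemma poly_const_sos:
  fixes P :: "real poly"
  assumes "degree P = 0" "\<And>x. poly P x \<ge> 0"
  shows "uni_sos_le d P"
proof -
  define c where "c = coeff P 0"
  have P: "P = [:c:]" using assms(1) unfolding c_def by (rule degree_0_id[symmetric])
  have "c \<ge> 0" using assms(2)[of 0] by (simp add: P)
  then have "P = [:sqrt c:] ^ 2" by (simp add: P power2_eq_square)
  then show ?thesis unfolding uni_sos_le_def by (intro exI[of _ "[[:sqrt c:]]"]) simp
qed

lemma poly_nonneg_min:
  fixes P :: "real poly"
  assumes "\<And>x. poly P x \<ge> 0"
  shows "\<exists>a. \<forall>x. poly P a \<le> poly P x"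
proof -
  obtain a0 p where P: "P = pCons a0 p" by (rule pCons_cases)
  show ?thesis
  proof (cases "p = 0")
    case True
    then show ?thesis by (simp add: P)
  next
    case False
    obtain R where R: "\<And>z. R \<le> norm z \<Longrightarrow> poly P 0 \<le> norm (poly P z)"
      using poly_infinity[OF False, of "poly P 0" a0] unfolding P by blast
    have "\<exists>m\<in>{-\<bar>R\<bar>..\<bar>R\<bar>}. \<forall>y\<in>{-\<bar>R\<bar>..\<bar>R\<bar>}. poly P m \<le> poly P y"
      by (intro continuous_attains_inf) (auto intro: continuous_intros)
    then obtain m where m: "\<And>y. y \<in> {-\<bar>R\<bar>..\<bar>R\<bar>} \<Longrightarrow> poly P m \<le> poly P y" by blast
    have "poly P m \<le> poly P x" for x
    proof (cases "x \<in> {-\<bar>R\<bar>..\<bar>R\<bar>}")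
      case True then show ?thesis by (rule m)
    next
      case False
      then have "R \<le> norm x" by auto
      then have "poly P 0 \<le> poly P x" using R assms by fastforce
      moreover have "poly P m \<le> poly P 0" by (rule m) simp
      ultimately show ?thesis by simp
    qed
    then show ?thesis by blast
  qed
qed

lemma uni_sos:
  fixes P :: "real poly"
  shows "(\<forall>x. poly P x \<ge> 0) \<Longrightarrow> degree P \<le> 2 * d \<Longrightarrow> uni_sos_le d P"
proof (induction d arbitrary: P)
  case 0
  then show ?case using poly_const_sos by auto
next
  case (Suc d)
  show ?case
  proof (cases "degree P = 0")
    case True
    then show ?thesis using poly_const_sos Suc.prems by auto
  next
    case False
    obtain a where a: "\<And>x. poly P a \<le> poly P x" using poly_nonneg_min Suc.prems(1) by blast
    define c where "c = poly P a"
    define P' where "P' = P - [:c:]"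
    have "poly P' a = 0" unfolding P'_def c_def by simp
    then obtain Q1 where Q1: "P' = [:-a, 1:] * Q1" using poly_eq_0_iff_dvd by blast
    have "poly (pderiv P) a = 0"
      using DERIV_local_min[OF poly_DERIV[of P a], of 1] a by auto
    moreover have "pderiv P' = pderiv P" unfolding P'_def by (simp add: pderiv_diff pderiv_pCons)
    moreover have "pderiv ([:-a, 1:] * Q1) = [:-a, 1:] * pderiv Q1 + Q1 * pderiv [:-a, 1:]"
      by (rule pderiv_mult)
    moreover have "pderiv [:-a, 1:] = 1" by (simp add: pderiv_pCons)
    ultimately have "poly Q1 a = 0" unfolding Q1 by simp
    then obtain Q2 where Q2: "Q1 = [:-a, 1:] * Q2" using poly_eq_0_iff_dvd by blast
    have "P = [:c:] + [:-a, 1:] * ([:-a, 1:] * Q2)"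
      unfolding Q2[symmetric] Q1[symmetric] P'_def by simp
    then have PQ: "P = [:c:] + [:-a, 1:] ^ 2 * Q2"
      by (simp only: power2_eq_square mult.assoc)
    have Q2pos: "poly Q2 x \<ge> 0" if "x \<noteq> a" for x
    proof -
      have "poly P x - c = (x - a) ^ 2 * poly Q2 x" using PQ by (simp add: algebra_simps)
      moreover have "poly P x - c \<ge> 0" using a unfolding c_def by simp
      moreover have "(x - a) ^ 2 > 0" using that by simp
      ultimately show ?thesis by (simp add: zero_le_mult_iff)
    qed
    have "poly Q2 x \<ge> 0" for x
    proof (cases "x = a")
      case True
      have "(poly Q2 \<longlongrightarrow> poly Q2 a) (at a)"
        using poly_isCont[of a Q2] unfolding isCont_def .
      moreover have "eventually (\<lambda>y. 0 \<le> poly Q2 y) (at a)"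
        unfolding eventually_at by (intro exI[of _ 1]) (auto intro: Q2pos)
      ultimately have "0 \<le> poly Q2 a" by (rule tendsto_lowerbound) simp
      then show ?thesis using True by simp
    qed (rule Q2pos)
    moreover have "degree Q2 \<le> 2 * d"
    proof (cases "Q2 = 0")
      case False
      have "degree ([:-a, 1:] ^ 2 * Q2) \<noteq> 0"
      proof
        assume "degree ([:-a, 1:] ^ 2 * Q2) = 0"
        then have "degree P \<le> 0" unfolding PQ
          using degree_add_le[of "[:c:]" 0 "[:-a, 1:] ^ 2 * Q2"] by simp
        then show False using \<open>degree P \<noteq> 0\<close> by simp
      qed
      then have "degree P = degree ([:-a, 1:] ^ 2 * Q2)"
        unfolding PQ by (intro degree_add_eq_right) simp
      also have "\<dots> = 2 + degree Q2" using False by (simp add: degree_mult_eq degree_power_eq)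
      finally show ?thesis using Suc.prems(2) by simp
    qed simp
    ultimately obtain qs where qs: "\<forall>q\<in>set qs. degree q \<le> d" "Q2 = (\<Sum>q\<leftarrow>qs. q ^ 2)"
      using Suc.IH unfolding uni_sos_le_def by blast
    define qs' where "qs' = [:sqrt c:] # map (\<lambda>q. [:-a, 1:] * q) qs"
    have "c \<ge> 0" unfolding c_def using Suc.prems(1) by simp
    then have e2: "[:sqrt c:] ^ 2 = [:c:]" by (simp add: power2_eq_square)
    have e1: "(\<Sum>q\<leftarrow>map (\<lambda>q. [:-a, 1:] * q) qs. q ^ 2) = [:-a, 1:] ^ 2 * (\<Sum>q\<leftarrow>qs. q ^ 2)"
      by (induction qs) (simp_all only: list.map sum_list.Cons sum_list.Nil power_mult_distrib distrib_left mult_zero_right)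
    have "(\<Sum>q\<leftarrow>qs'. q ^ 2) = [:c:] + [:-a, 1:] ^ 2 * (\<Sum>q\<leftarrow>qs. q ^ 2)"
      unfolding qs'_def list.map(2) sum_list.Cons e1 e2 ..
    moreover have "\<forall>q\<in>set qs'. degree q \<le> Suc d"
    proof
      fix q assume "q \<in> set qs'"
      then consider "q = [:sqrt c:]" | q0 where "q0 \<in> set qs" "q = [:-a, 1:] * q0"
        unfolding qs'_def by auto
      then show "degree q \<le> Suc d"
      proof cases
        case (2 q0)
        have "degree q \<le> degree [:-a, 1:] + degree q0" unfolding 2 by (rule degree_mult_le)
        then show ?thesis using qs(1) 2 by fastforce
      qed simp
    qed
    ultimately show ?thesis unfolding uni_sos_le_def using PQ qs(2) by (intro exI[of _ qs']) simp
  qed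
qed


lemma poly_bounded_ray:
  fixes P :: "real poly"
  assumes "\<And>s. s \<ge> 0 \<Longrightarrow> \<bar>poly P s\<bar> \<le> B"
  shows "degree P = 0"
proof (rule ccontr)
  assume "degree P \<noteq> 0"
  obtain a0 p where P: "P = pCons a0 p" by (rule pCons_cases)
  with \<open>degree P \<noteq> 0\<close> have "p \<noteq> 0" by auto
  obtain R where R: "\<And>z. R \<le> norm z \<Longrightarrow> B + 1 \<le> norm (poly P z)"
    using poly_infinity[OF \<open>p \<noteq> 0\<close>, of "B + 1" a0] unfolding P by blast
  have "B + 1 \<le> \<bar>poly P \<bar>R\<bar>\<bar>" using R[of "\<bar>R\<bar>"] by simp
  moreover have "\<bar>poly P \<bar>R\<bar>\<bar> \<le> B" by (rule assms) simp
  ultimately show False by simp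
qed

lemma ray_line:
  assumes "mpoly_deg_le k (q :: real^'i::finite \<Rightarrow> real)"
  shows "\<exists>P. degree P \<le> k \<and> (\<forall>t. q (x + t *\<^sub>R d) = poly P t)"
proof -
  obtain P where P: "degree P \<le> k" "\<And>t. q (\<chi> i. poly [:x $ i, d $ i:] t) = poly P t"
  proof -
    have "degree [:x $ i, d $ i:] \<le> 1" for i by simp
    then show ?thesis using ray_poly[OF assms, of "\<lambda>i. [:x $ i, d $ i:]"] that by blast
  qed
  have "(\<chi> i. poly [:x $ i, d $ i:] t) = x + t *\<^sub>R d" for t
    by (simp add: vec_eq_iff)
  then show ?thesis using P by metis
qed

lemma ray_scale:
  assumes "mpoly_deg_le k (q :: real^'i::finite \<Rightarrow> real)"
  shows "\<exists>P. degree P \<le> k \<and> (\<forall>t. q (t *\<^sub>R x) = poly P t)"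
  using ray_line[OF assms, of 0 x] by simp

lemma monom_val_join:
  "monom_val (join_vec x y) \<alpha> = monom_val x (\<lambda>i. \<alpha> (Inl i)) * monom_val y (\<lambda>i. \<alpha> (Inr i))"
proof -
  have "monom_val (join_vec x y) \<alpha> = (\<Prod>k\<in>UNIV <+> UNIV. (join_vec x y $ k) ^ \<alpha> k)"
    unfolding monom_val_def by simp
  also have "\<dots> = monom_val x (\<lambda>i. \<alpha> (Inl i)) * monom_val y (\<lambda>i. \<alpha> (Inr i))"
    unfolding prod.Plus[OF finite finite] monom_val_def by (simp add: join_vec_def o_def)
  finally show ?thesis .
qed

lemma sum_join: "sum \<alpha> (UNIV :: ('i::finite + 'i) set) = sum (\<lambda>i. \<alpha> (Inl i)) UNIV + sum (\<lambda>i. \<alpha> (Inr i)) UNIV"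
proof -
  have "sum \<alpha> (UNIV :: ('i + 'i) set) = sum \<alpha> (UNIV <+> UNIV)" by simp
  also have "\<dots> = sum (\<lambda>i. \<alpha> (Inl i)) UNIV + sum (\<lambda>i. \<alpha> (Inr i)) UNIV"
    unfolding sum.Plus[OF finite finite] by (simp add: o_def)
  finally show ?thesis .
qed

lemma subst_join:
  assumes "mpoly_deg_le K (q :: real^('i::finite + 'i) \<Rightarrow> real)"
  shows "mpoly_deg_le K (\<lambda>x. q (join_vec x y))"
proof -
  obtain c where q: "q = (\<lambda>x. \<Sum>\<alpha>\<in>{\<alpha>. sum \<alpha> UNIV \<le> K}. c \<alpha> * monom_val x \<alpha>)"
    using assms unfolding mpoly_deg_le_def by blast
  have "mpoly_deg_le K (\<lambda>x::real^'i. \<Sum>\<alpha>\<in>{\<alpha>::'i+'i\<Rightarrow>nat. sum \<alpha> UNIV \<le> K}.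
           (c \<alpha> * monom_val y (\<lambda>i. \<alpha> (Inr i))) * monom_val x (\<lambda>i. \<alpha> (Inl i)))"
  proof (rule mpoly_sum)
    show "finite {\<alpha>::'i+'i\<Rightarrow>nat. sum \<alpha> UNIV \<le> K}" by (rule finite_deg_set)
  qed (auto simp: sum_join)
  moreover have "(\<lambda>x. q (join_vec x y)) = (\<lambda>x::real^'i. \<Sum>\<alpha>\<in>{\<alpha>::'i+'i\<Rightarrow>nat. sum \<alpha> UNIV \<le> K}.
           (c \<alpha> * monom_val y (\<lambda>i. \<alpha> (Inr i))) * monom_val x (\<lambda>i. \<alpha> (Inl i)))"
    unfolding q monom_val_join by (simp add: mult_ac)
  ultimately show ?thesis by simp
qed

lemma const_mpoly: "mpoly_deg_le K (\<lambda>x::real^'i::finite. c)"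
proof -
  have "mpoly_deg_le K (\<lambda>x::real^'i. \<Sum>b\<in>{()}. c * monom_val x (\<lambda>i. 0))"
    by (rule mpoly_sum) auto
  moreover have "monom_val x (\<lambda>i. 0) = 1" for x :: "real^'i" unfolding monom_val_def by simp
  ultimately show ?thesis by simp
qed

lemma ray_join:
  assumes "mpoly_deg_le k (q :: real^('i::finite + 'i) \<Rightarrow> real)"
  shows "\<exists>P. \<forall>t. q (join_vec (t *\<^sub>R x) y) = poly P t"
proof -
  define L where "L k = (case k of Inl i \<Rightarrow> [:0, x $ i:] | Inr i \<Rightarrow> [:y $ i:])" for k
  have "degree (L k) \<le> 1" for k unfolding L_def by (cases k) auto
  then obtain P where P: "\<And>t. q (\<chi> k. poly (L k) t) = poly P t"
    using ray_poly[OF assms, of L] by auto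
  have "(\<chi> k. poly (L k) t) = join_vec (t *\<^sub>R x) y" for t
    unfolding vec_eq_iff join_vec_def L_def by (auto split: sum.splits)
  then show ?thesis using P by metis
qed

lemma sos_nonneg: "sos F \<Longrightarrow> F z \<ge> 0"
  unfolding sos_def sos_le_def by (auto intro!: sum_list_nonneg)

lemma tangent_convex:
  fixes f :: "real^'n::finite \<Rightarrow> real"
  assumes "\<And>x y. f y + g y \<bullet> (x - y) \<le> f x"
  shows "convex_on UNIV f"
proof (rule convex_onI)
  fix t :: real and x y :: "real^'n"
  assume t: "0 < t" "t < 1"
  define z where "z = (1 - t) *\<^sub>R x + t *\<^sub>R y"
  have "(1 - t) * (f z + g z \<bullet> (x - z)) + t * (f z + g z \<bullet> (y - z)) \<le> (1 - t) * f x + t * f y"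
    using t assms[of z x] assms[of z y] by (intro add_mono mult_left_mono) auto
  moreover have "(1 - t) * (f z + g z \<bullet> (x - z)) + t * (f z + g z \<bullet> (y - z))
     = f z + g z \<bullet> ((1 - t) *\<^sub>R (x - z) + t *\<^sub>R (y - z))"
    by (simp add: inner_add_right algebra_simps)
  moreover have "(1 - t) *\<^sub>R (x - z) + t *\<^sub>R (y - z) = 0"
    unfolding z_def by (simp add: algebra_simps)
  ultimately show "f ((1 - t) *\<^sub>R x + t *\<^sub>R y) \<le> (1 - t) * f x + t * f y"
    unfolding z_def by simp
qed simp


lemma convex_poly_min:
  fixes f :: "real^'n::finite \<Rightarrow> real"
  assumes mp: "mpoly_deg_le k f" and cvx: "convex_on UNIV f" and cont: "continuous_on UNIV f"
    and nn: "\<And>x. f x \<ge> 0"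
  shows "\<exists>y. \<forall>x. f y \<le> f x"
proof -
  define L where "L = {d. \<forall>x t. f (x + t *\<^sub>R d) = f x}"
  have L0: "0 \<in> L" unfolding L_def by simp
  have Ladd: "d1 + d2 \<in> L" if d1: "d1 \<in> L" and d2: "d2 \<in> L" for d1 d2
  proof -
    have "f (x + t *\<^sub>R (d1 + d2)) = f x" for x t
    proof -
      have "f (x + t *\<^sub>R (d1 + d2)) = f ((x + t *\<^sub>R d1) + t *\<^sub>R d2)" by (simp add: algebra_simps)
      also have "\<dots> = f x" using d1 d2 unfolding L_def by simp
      finally show ?thesis .
    qed
    then show ?thesis unfolding L_def by blast
  qed
  have Lsc: "c *\<^sub>R d \<in> L" if d: "d \<in> L" for c d
    using d unfolding L_def by simp
  have subL: "subspace L" unfolding subspace_def using L0 Ladd Lsc by blast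
  have spanL: "span L = L" using subL by (simp add: span_eq_iff)
  define M where "M = {m. \<forall>w\<in>L. m \<bullet> w = 0}"
  have decomp: "\<exists>m\<in>M. f x = f m" for x
  proof -
    obtain l z where lz: "l \<in> span L" "\<And>w. w \<in> span L \<Longrightarrow> orthogonal z w" "x = l + z"
      by (rule orthogonal_subspace_decomp_exists[of L x]) blast
    have "z \<in> M" using lz(2) spanL unfolding M_def orthogonal_def by auto
    have "l \<in> L" using lz(1) spanL by simp
    then have "f (z + 1 *\<^sub>R l) = f z" unfolding L_def by blast
    moreover note \<open>z \<in> M\<close>
    ultimately show ?thesis using lz(3) by (auto simp: add.commute)
  qed
  have key: "d \<in> L" if dd: "\<And>t. t \<ge> 0 \<Longrightarrow> f (t *\<^sub>R d) \<le> f 0" for d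
  proof -
    have "f (x + t *\<^sub>R d) = f x" for x t
    proof -
      obtain P where P: "\<And>t. f (x + t *\<^sub>R d) = poly P t" using ray_line[OF mp] by blast
      have "\<bar>poly P s\<bar> \<le> (f (2 *\<^sub>R x) + f 0) / 2" if "s \<ge> 0" for s
      proof -
        have "f (x + s *\<^sub>R d) = f ((1 - 1/2) *\<^sub>R (2 *\<^sub>R x) + (1/2) *\<^sub>R ((2 * s) *\<^sub>R d))"
          by (simp add: algebra_simps)
        also have "\<dots> \<le> (1 - 1/2) * f (2 *\<^sub>R x) + (1/2) * f ((2 * s) *\<^sub>R d)"
          by (rule convex_onD[OF cvx]) auto
        also have "\<dots> \<le> (f (2 *\<^sub>R x) + f 0) / 2" using dd[of "2 * s"] that by simp
        finally show ?thesis using nn[of "x + s *\<^sub>R d"] P[of s] by simp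
      qed
      then have "degree P = 0" by (rule poly_bounded_ray)
      then have "poly P t = poly P 0" by (metis degree_0_id poly_pCons mult_zero_right add_0_right poly_0)
      then show ?thesis using P[of t] P[of 0] by simp
    qed
    then show ?thesis unfolding L_def by blast
  qed
  define S where "S = {m\<in>M. f m \<le> f 0}"
  have closedM: "closed M"
  proof -
    have "M = (\<Inter>w\<in>L. {m. m \<bullet> w = 0})" unfolding M_def by auto
    moreover have "closed {m::real^'n. m \<bullet> w = 0}" for w
      by (intro closed_Collect_eq continuous_intros)
    ultimately show ?thesis by auto
  qed
  have MS: "c *\<^sub>R m \<in> M" if "m \<in> M" for c m using that unfolding M_def by auto
  have bS: "bounded S"
  proof (rule ccontr)
    assume "\<not> bounded S"
    then have "\<forall>n::nat. \<exists>y\<in>S. real n < norm y" unfolding bounded_iff by (meson not_le)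
    then obtain Y where Y: "\<And>n. Y n \<in> S" "\<And>n. real n < norm (Y n)" by metis
    define D where "D n = (1 / norm (Y n)) *\<^sub>R Y n" for n
    have Ypos: "norm (Y n) > 0" for n using Y(2)[of n] by linarith
    have DS: "D n \<in> sphere 0 1" for n unfolding D_def using Ypos[of n] by simp
    obtain d r where dr: "d \<in> sphere 0 1" "strict_mono r" "(D \<circ> r) \<longlonglongrightarrow> d"
      using compact_imp_seq_compact[OF compact_sphere[of 0 1]] DS unfolding seq_compact_def by metis
    have DM: "D n \<in> M" for n unfolding D_def using Y(1)[of n] MS unfolding S_def by auto
    have "\<forall>w\<in>L. d \<bullet> w = 0"
    proof
      fix w assume "w \<in> L"
      have "((\<lambda>n. (D \<circ> r) n \<bullet> w) \<longlonglongrightarrow> d \<bullet> w)" by (intro tendsto_intros dr(3))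
      moreover have "(\<lambda>n. (D \<circ> r) n \<bullet> w) = (\<lambda>n. 0)" using DM \<open>w \<in> L\<close> unfolding M_def by auto
      ultimately show "d \<bullet> w = 0" by (simp add: LIMSEQ_const_iff)
    qed
    then have "d \<in> M" unfolding M_def by simp
    moreover have "d \<in> L"
    proof (rule key)
      fix t :: real assume t: "t \<ge> 0"
      have "(\<lambda>n. f (t *\<^sub>R (D \<circ> r) n)) \<longlonglongrightarrow> f (t *\<^sub>R d)"
        using cont dr(3) by (intro continuous_on_tendsto_compose[OF cont] tendsto_intros) (auto simp: o_def)
      moreover have "eventually (\<lambda>n. f (t *\<^sub>R (D \<circ> r) n) \<le> f 0) sequentially"
      proof (rule eventually_sequentiallyI[of "nat \<lceil>t\<rceil>"])
        fix n assume n: "nat \<lceil>t\<rceil> \<le> n"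
        define y where "y = Y (r n)"
        have "real n \<le> real (r n)" using seq_suble[OF dr(2)] by simp
        then have "t < norm y" using Y(2)[of "r n"] n unfolding y_def by linarith
        define lam where "lam = t / norm y"
        have lamb: "0 \<le> lam" "lam \<le> 1" unfolding lam_def using t \<open>t < norm y\<close> by (auto simp: divide_le_eq_1)
        have "t *\<^sub>R (D \<circ> r) n = (1 - lam) *\<^sub>R 0 + lam *\<^sub>R y"
          unfolding D_def lam_def y_def by simp
        then have "f (t *\<^sub>R (D \<circ> r) n) \<le> (1 - lam) * f 0 + lam * f y"
          using convex_onD[OF cvx, of lam 0 y] lamb by simp
        also have "\<dots> \<le> (1 - lam) * f 0 + lam * f 0"
          using Y(1)[of "r n"] lamb unfolding y_def S_def by (intro add_left_mono mult_left_mono) auto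
        finally show "f (t *\<^sub>R (D \<circ> r) n) \<le> f 0" by (simp add: algebra_simps)
      qed
      ultimately show "f (t *\<^sub>R d) \<le> f 0" by (rule tendsto_upperbound) simp
    qed
    ultimately have "d \<bullet> d = 0" unfolding M_def by auto
    then show False using dr(1) by simp
  qed
  have cS: "closed S"
  proof -
    have "closed {m. f m \<le> f 0}" by (rule closed_Collect_le[OF cont continuous_on_const])
    moreover have "S = M \<inter> {m. f m \<le> f 0}" unfolding S_def by auto
    ultimately show ?thesis using closedM by (simp add: closed_Int)
  qed
  have "compact S" using bS cS by (simp add: compact_eq_bounded_closed)
  moreover have "0 \<in> S" unfolding S_def M_def by simp
  ultimately obtain y where y: "y \<in> S" "\<And>z. z \<in> S \<Longrightarrow> f y \<le> f z"
    using continuous_attains_inf[of S f] continuous_on_subset[OF cont] by blast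
  have "f y \<le> f x" for x
  proof -
    obtain m where m: "m \<in> M" "f x = f m" using decomp by blast
    show ?thesis
    proof (cases "f m \<le> f 0")
      case True then show ?thesis using y(2)[of m] m unfolding S_def by auto
    next
      case False then show ?thesis using y(2)[of 0] m \<open>0 \<in> S\<close> by auto
    qed
  qed
  then show ?thesis by blast
qed

theorem lemma4:
  fixes f p :: "real ^ 'n::finite \<Rightarrow> real"
    and u :: "'n \<Rightarrow> real poly"
    and d :: "'n \<Rightarrow> nat"
    and r :: nat
  assumes "sos_convex f"
    and "\<And>j. degree (u j) \<le> 2 * d j"
    and "\<And>j. convex_on UNIV (poly (u j))"
    and "sos_convex p"
    and "mpoly_deg_le (2 * r) p"
    and "\<And>x. f x = (\<Sum>j\<in>UNIV. poly (u j) (x $ j)) + p x"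
    and "\<And>x. f x \<ge> 0"
  shows "\<exists>\<sigma> \<sigma>s. sos_le r \<sigma> \<and> (\<forall>j. uni_sos_le (d j) (\<sigma>s j)) \<and>
           (\<forall>x. f x = \<sigma> x + (\<Sum>j\<in>UNIV. poly (\<sigma>s j) (x $ j)))"
proof -
  from assms(1) obtain kf gf Ff where mpf: "mpoly_deg_le kf f"
    and gf: "\<And>y. (f has_derivative (\<lambda>h. gf y \<bullet> h)) (at y)"
    and Ff: "sos Ff" "\<And>x y. Ff (join_vec x y) = f x - f y - gf y \<bullet> (x - y)"
    unfolding sos_convex_def mpoly_def by blast
  from assms(4) obtain gp Fp where gp: "\<And>y. (p has_derivative (\<lambda>h. gp y \<bullet> h)) (at y)"
    and Fp: "sos Fp" "\<And>x y. Fp (join_vec x y) = p x - p y - gp y \<bullet> (x - y)"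
    unfolding sos_convex_def by blast
  have tan: "f y + gf y \<bullet> (x - y) \<le> f x" for x y
    using sos_nonneg[OF Ff(1), of "join_vec x y"] Ff(2)[of x y] by simp
  have cvx: "convex_on UNIV f" by (rule tangent_convex[of f gf]) (use tan in simp)
  have cont: "continuous_on UNIV f"
    using gf by (meson continuous_at_imp_continuous_on has_derivative_continuous)
  obtain y where ymin: "\<And>x. f y \<le> f x" using convex_poly_min[OF mpf cvx cont assms(7)] by blast
  have gf0: "(\<lambda>h. gf y \<bullet> h) = (\<lambda>h. 0)"
    by (rule has_derivative_local_min[OF gf]) (intro always_eventually, simp add: ymin)
  define s' where "s' h = (\<Sum>j\<in>UNIV. poly (pderiv (u j)) (y $ j) * h $ j)" for h
  have sder: "((\<lambda>x. \<Sum>j\<in>UNIV. poly (u j) (x $ j)) has_derivative s') (at y)"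
    unfolding s'_def
  proof (rule has_derivative_sum)
    fix j :: 'n
    have "((\<lambda>x. x $ j) has_derivative (\<lambda>h. h $ j)) (at y)"
      by (rule bounded_linear_imp_has_derivative) (rule bounded_linear_vec_nth)
    moreover have "(poly (u j) has_derivative (\<lambda>h. poly (pderiv (u j)) (y $ j) * h)) (at (y $ j))"
      using poly_DERIV[of "u j" "y $ j"] unfolding has_field_derivative_def by simp
    ultimately show "((\<lambda>x. poly (u j) (x $ j)) has_derivative (\<lambda>h. poly (pderiv (u j)) (y $ j) * h $ j)) (at y)"
      by (rule has_derivative_compose)
  qed
  have fsum: "f = (\<lambda>x. (\<Sum>j\<in>UNIV. poly (u j) (x $ j)) + p x)" using assms(6) by auto
  have "(f has_derivative (\<lambda>h. s' h + gp y \<bullet> h)) (at y)"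
    unfolding fsum by (rule has_derivative_add[OF sder gp])
  then have "(\<lambda>h. gf y \<bullet> h) = (\<lambda>h. s' h + gp y \<bullet> h)" using has_derivative_unique gf by blast
  with gf0 have grad0: "\<And>h. s' h + gp y \<bullet> h = 0" by (metis (mono_tags))
  define T where "T j = u j - [:poly (u j) (y $ j):] - smult (poly (pderiv (u j)) (y $ j)) [:-(y $ j), 1:]" for j
  have polyT: "poly (T j) t = poly (u j) t - poly (u j) (y $ j) - poly (pderiv (u j)) (y $ j) * (t - y $ j)" for j t
    unfolding T_def by (simp add: algebra_simps)
  have Tnn: "poly (T j) t \<ge> 0" for j t
  proof -
    have "poly (pderiv (u j)) (y $ j) * (t - y $ j) \<le> poly (u j) t - poly (u j) (y $ j)"
      by (rule convex_on_imp_above_tangent[OF assms(3)]) auto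
    then show ?thesis unfolding polyT by simp
  qed
  have Tdeg: "degree (T j) \<le> 2 * d j" for j
  proof (cases "d j = 0")
    case True
    then have du: "degree (u j) = 0" using assms(2)[of j] by simp
    then have "pderiv (u j) = 0" by (simp add: pderiv_eq_0_iff)
    then have "T j = u j - [:poly (u j) (y $ j):]" unfolding T_def by simp
    moreover have "degree (u j - [:poly (u j) (y $ j):]) \<le> 0" using du by (intro degree_diff_le) auto
    ultimately show ?thesis by simp
  next
    case False
    have "degree (smult (poly (pderiv (u j)) (y $ j)) [:-(y $ j), 1:]) \<le> degree [:-(y $ j), 1:]"
      by (rule degree_smult_le)
    then have "degree (smult (poly (pderiv (u j)) (y $ j)) [:-(y $ j), 1:]) \<le> 2 * d j" using False by simp
    then show ?thesis unfolding T_def using assms(2)[of j] by (intro degree_diff_le) auto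
  qed
  have Tsos: "uni_sos_le (d j) (T j)" for j using uni_sos[of "T j" "d j"] Tnn Tdeg by blast
  obtain K qs where qs: "\<forall>q\<in>set qs. mpoly_deg_le K q" "Fp = (\<lambda>z. \<Sum>q\<leftarrow>qs. (q z) ^ 2)"
    using Fp(1) unfolding sos_def sos_le_def by blast
  have fy: "f y \<ge> 0" by (rule assms(7))
  define \<sigma> where "\<sigma> x = f y + Fp (join_vec x y)" for x
  define qs' where "qs' = (\<lambda>x. sqrt (f y)) # map (\<lambda>q x. q (join_vec x y)) qs"
  have \<sigma>qs: "\<sigma> = (\<lambda>x. \<Sum>q\<leftarrow>qs'. (q x) ^ 2)"
    unfolding \<sigma>_def qs'_def qs(2) using fy by (simp add: o_def)
  have \<sigma>p: "\<sigma> x = f y + p x - p y - gp y \<bullet> (x - y)" for x unfolding \<sigma>_def Fp(2) by simp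
  have qs'mp: "\<forall>q\<in>set qs'. mpoly_deg_le K q"
    unfolding qs'_def using qs(1) by (auto intro: const_mpoly subst_join)
  have qs'ray: "\<forall>q\<in>set qs'. \<exists>P. \<forall>t. q (t *\<^sub>R x) = poly P t" for x
  proof
    fix q assume "q \<in> set qs'"
    then consider "q = (\<lambda>x. sqrt (f y))" | q0 where "q0 \<in> set qs" "q = (\<lambda>x. q0 (join_vec x y))"
      unfolding qs'_def by auto
    then show "\<exists>P. \<forall>t. q (t *\<^sub>R x) = poly P t"
    proof cases
      case 1 then show ?thesis by (intro exI[of _ "[:sqrt (f y):]"]) simp
    next
      case (2 q0) then show ?thesis using ray_join[of K q0 x y] qs(1) by auto
    qed
  qed
  have "\<forall>q\<in>set qs'. mpoly_deg_le r q"
  proof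
    fix q assume q: "q \<in> set qs'"
    show "mpoly_deg_le r q"
    proof (rule hom_reduce)
      show "mpoly_deg_le K q" using qs'mp q by blast
    next
      fix x :: "real^'n"
      define Pf where "Pf q = (SOME P. \<forall>t. q (t *\<^sub>R x) = poly P t)" for q
      have Pf: "q (t *\<^sub>R x) = poly (Pf q) t" if "q \<in> set qs'" for q t
        using someI_ex[OF qs'ray[of x, rule_format, OF that]] unfolding Pf_def by blast
      obtain Pp where Pp: "degree Pp \<le> 2 * r" "\<And>t. p (t *\<^sub>R x) = poly Pp t"
        using ray_scale[OF assms(5)] by blast
      define G where "G = Pp + [:f y - p y + gp y \<bullet> y, - (gp y \<bullet> x):]"
      have pG: "poly G t = \<sigma> (t *\<^sub>R x)" for t
        unfolding G_def \<sigma>p by (simp add: Pp(2) inner_diff_right algebra_simps)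
      have "degree [:f y - p y + gp y \<bullet> y, - (gp y \<bullet> x):] \<le> 2 * r + 1" by simp
      then have dG: "degree G \<le> 2 * r + 1" unfolding G_def using Pp(1)
        by (intro degree_add_le) auto
      define H where "H = (\<Sum>q\<leftarrow>map Pf qs'. q ^ 2)"
      have ph: "poly (\<Sum>q\<leftarrow>map Pf qs. q ^ 2) t = (\<Sum>q\<leftarrow>qs. (poly (Pf q) t) ^ 2)" for qs t
        by (induction qs) simp_all
      have "poly H t = poly G t" for t
      proof -
        have "poly H t = (\<Sum>q\<leftarrow>qs'. (poly (Pf q) t) ^ 2)" unfolding H_def ph ..
        also have "\<dots> = (\<Sum>q\<leftarrow>qs'. (q (t *\<^sub>R x)) ^ 2)"
          by (intro arg_cong[where f=sum_list] map_cong refl) (simp add: Pf)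
        also have "\<dots> = poly G t" unfolding pG \<sigma>qs ..
        finally show ?thesis .
      qed
      then have HG: "H = G" using poly_eq_poly_eq_iff by blast
      have "2 * degree (Pf q) \<le> degree H" using sos_list_deg[of "map Pf qs'"] q unfolding H_def by auto
      then have "degree (Pf q) \<le> r" using dG HG by simp
      then show "\<exists>P. degree P \<le> r \<and> (\<forall>t. q (t *\<^sub>R x) = poly P t)" using Pf[OF q] by blast
    qed
  qed
  then have sos\<sigma>: "sos_le r \<sigma>" unfolding sos_le_def \<sigma>qs by blast
  have eq: "f x = \<sigma> x + (\<Sum>j\<in>UNIV. poly (T j) (x $ j))" for x
  proof -
    have g: "s' (x - y) + gp y \<bullet> (x - y) = 0" by (rule grad0)
    have "(\<Sum>j\<in>UNIV. poly (T j) (x $ j)) = (\<Sum>j\<in>UNIV. poly (u j) (x $ j)) - (\<Sum>j\<in>UNIV. poly (u j) (y $ j)) - s' (x - y)"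
    proof -
      have "(\<Sum>j\<in>UNIV. poly (T j) (x $ j)) = (\<Sum>j\<in>UNIV. poly (u j) (x $ j) - poly (u j) (y $ j) - poly (pderiv (u j)) (y $ j) * (x - y) $ j)"
        unfolding polyT by simp
      also have "\<dots> = (\<Sum>j\<in>UNIV. poly (u j) (x $ j)) - (\<Sum>j\<in>UNIV. poly (u j) (y $ j)) - s' (x - y)"
        by (simp only: sum_subtractf s'_def)
      finally show ?thesis .
    qed
    then show ?thesis using g assms(6)[of x] assms(6)[of y] \<sigma>p[of x] by linarith
  qed
  show ?thesis using sos\<sigma> Tsos eq by blast
qed

end
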